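(* Let $(\mathcal L,\langle\,,\,\rangle)$ be a (right) Leibniz algebra over a field $\mathbf{k}$ (any dimension and characteristic) with basis $X=\{x_j\mid j\in J\}$, and let $k\in\mathbf{k}$ be nonzero. Let $((\hat A,\hat q),\hat i)$ be the free invariant algebra generated by $X$ (constructed as below), extend $\hat i$ linearly to an injective linear map $\mathcal L\to\hat A$, $x\mapsto\hat x$, and let $R$ be the two-sided ideal of $\hat A$ generated by all elements $$\widehat{\langle x,y\rangle}-\hat x\hat y+\hat y\hat x-\hat y\hat q\hat x+\hat x\hat y\hat q-k\hat x\hat q\hat y+k\hat q\hat y\hat x,\qquad x,y\in\mathcal L.$$ Let $\mathcal U:=\hat A/R$, $\bar q:=\hat q+R$, $i(x):=\hat x+R$. Then $((\mathcal U,\bar q),i)$ is the enveloping$^{\langle4\text{-th}\rangle}$ algebra of $(\mathcal L,\langle\,,\,\rangle)$.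
   Context: Right Leibniz algebra: bilinear $\langle\,,\,\rangle$ with $\langle\langle x,y\rangle,z\rangle=\langle x,\langle y,z\rangle\rangle+\langle\langle x,z\rangle,y\rangle$. Invariant algebra: for an associative algebra $A$ (with identity) and idempotent $q$, $(A,q):=\{a\in A\mid qaq=qa\}$; it is a Leibniz algebra $Leib((A,q),\langle\,,\,\rangle_{4,k})$ under $\langle a,b\rangle_{4,k}:=ab-ba+bqa-abq+kaqb-kqba$. Invariant homomorphism $(A,q_A)\to(B,q_B)$: linear, multiplicative, $1_A\mapsto1_B$, $q_A\mapsto q_B$. Free invariant algebra on $X$: $V$ with basis $X\cup\{\tilde q\}$ ($\tilde q\notin X$), $I\subseteq T(V)$ the ideal generated by $\tilde q\otimes\tilde q-\tilde q$ and $\tilde q\otimes a\otimes\tilde q-\tilde q\otimes a$ ($a\in T(V)$), $\hat A=T(V)/I$, $\hat q=\tilde q+I$, $\hat i(x_j)=x_j+I$ (these are linearly independent). An enveloping$^{\langle4\text{-th}\rangle}$ algebra of $\mathcal L$ is a pair $((\mathcal U,\bar q),i)$ with $(\mathcal U,\bar q)$ an invariant algebra and $i:\mathcal L\to(\mathcal U,\bar q)$ such that (i) $i$ is a Leibniz algebra homomorphism $\mathcal L\to Leib((\mathcal U,\bar q),\langle\,,\,\rangle_{4,k})$, i.e. $i(\langle x,y\rangle)=i(x)i(y)-i(y)i(x)+i(y)\bar qi(x)-i(x)i(y)\bar q+ki(x)\bar qi(y)-k\bar qi(y)i(x)$, and (ii) for every invariant algebra $(A,q)$ and every Leibniz homomorphism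 $f:\mathcal L\to Leib((A,q),\langle\,,\,\rangle_{4,k})$ there is a unique invariant homomorphism $f':(\mathcal U,\bar q)\to(A,q)$ with $f=f'\circ i$. *)

theory Defs
  imports Main "HOL.Vector_Spaces"
begin

record ('a, 'k) kalg =
  acar  :: "'a set"
  aadd  :: "'a \<Rightarrow> 'a \<Rightarrow> 'a"
  azero :: 'a
  amul  :: "'a \<Rightarrow> 'a \<Rightarrow> 'a"
  aone  :: 'a
  asmul :: "'k \<Rightarrow> 'a \<Rightarrow> 'a"

definition asub :: "('a, 'k::field) kalg \<Rightarrow> 'a \<Rightarrow> 'a \<Rightarrow> 'a" where
  "asub A a b = aadd A a (asmul A (-1) b)"

definition is_kalg :: "('a, 'k::field) kalg \<Rightarrow> bool" where
  "is_kalg A \<longleftrightarrow>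
     azero A \<in> acar A \<and> aone A \<in> acar A \<and>
     (\<forall>a\<in>acar A. \<forall>b\<in>acar A. aadd A a b \<in> acar A \<and> amul A a b \<in> acar A) \<and>
     (\<forall>c. \<forall>a\<in>acar A. asmul A c a \<in> acar A) \<and>
     (\<forall>a\<in>acar A. \<forall>b\<in>acar A. \<forall>c\<in>acar A. aadd A (aadd A a b) c = aadd A a (aadd A b c)) \<and>
     (\<forall>a\<in>acar A. \<forall>b\<in>acar A. aadd A a b = aadd A b a) \<and>
     (\<forall>a\<in>acar A. aadd A a (azero A) = a) \<and>
     (\<forall>a\<in>acar A. aadd A a (asmul A (-1) a) = azero A) \<and>
     (\<forall>a\<in>acar A. asmul A 1 a = a) \<and>
     (\<forall>c d. \<forall>a\<in>acar A. asmul A (c * d) a = asmul A c (asmul A d a)) \<and>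
     (\<forall>c d. \<forall>a\<in>acar A. asmul A (c + d) a = aadd A (asmul A c a) (asmul A d a)) \<and>
     (\<forall>c. \<forall>a\<in>acar A. \<forall>b\<in>acar A. asmul A c (aadd A a b) = aadd A (asmul A c a) (asmul A c b)) \<and>
     (\<forall>a\<in>acar A. \<forall>b\<in>acar A. \<forall>c\<in>acar A. amul A (amul A a b) c = amul A a (amul A b c)) \<and>
     (\<forall>a\<in>acar A. amul A (aone A) a = a \<and> amul A a (aone A) = a) \<and>
     (\<forall>a\<in>acar A. \<forall>b\<in>acar A. \<forall>c\<in>acar A.
        amul A a (aadd A b c) = aadd A (amul A a b) (amul A a c) \<and>
        amul A (aadd A a b) c = aadd A (amul A a c) (amul A b c)) \<and>
     (\<forall>c. \<forall>a\<in>acar A. \<forall>b\<in>acar A.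
        asmul A c (amul A a b) = amul A (asmul A c a) b \<and>
        asmul A c (amul A a b) = amul A a (asmul A c b))"

definition invariant_alg :: "('a, 'k::field) kalg \<Rightarrow> 'a \<Rightarrow> bool" where
  "invariant_alg A q \<longleftrightarrow> is_kalg A \<and> q \<in> acar A \<and> amul A q q = q"

definition inv_set :: "('a, 'k::field) kalg \<Rightarrow> 'a \<Rightarrow> 'a set" where
  "inv_set A q = {a \<in> acar A. amul A q (amul A a q) = amul A q a}"

definition br4 :: "('a, 'k::field) kalg \<Rightarrow> 'a \<Rightarrow> 'k \<Rightarrow> 'a \<Rightarrow> 'a \<Rightarrow> 'a" where
  "br4 A q k a b =
     asub A
      (aadd A
        (asub A
          (aadd A
            (asub A (amul A a b) (amul A b a))
            (amul A b (amul A q a)))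
          (amul A a (amul A b q)))
        (asmul A k (amul A a (amul A q b))))
      (asmul A k (amul A q (amul A b a)))"

definition inv_hom :: "('a, 'k::field) kalg \<Rightarrow> 'a \<Rightarrow> ('b, 'k) kalg \<Rightarrow> 'b \<Rightarrow> ('a \<Rightarrow> 'b) \<Rightarrow> bool" where
  "inv_hom A qA B qB \<phi> \<longleftrightarrow>
     (\<forall>a\<in>inv_set A qA. \<phi> a \<in> inv_set B qB) \<and>
     (\<forall>a\<in>inv_set A qA. \<forall>b\<in>inv_set A qA. \<phi> (aadd A a b) = aadd B (\<phi> a) (\<phi> b)) \<and>
     (\<forall>c. \<forall>a\<in>inv_set A qA. \<phi> (asmul A c a) = asmul B c (\<phi> a)) \<and>
     (\<forall>a\<in>inv_set A qA. \<forall>b\<in>inv_set A qA. \<phi> (amul A a b) = amul B (\<phi> a) (\<phi> b)) \<and>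
     \<phi> (aone A) = aone B \<and> \<phi> qA = qB"

definition leibniz_alg :: "('k::field \<Rightarrow> 'L::ab_group_add \<Rightarrow> 'L) \<Rightarrow> ('L \<Rightarrow> 'L \<Rightarrow> 'L) \<Rightarrow> bool" where
  "leibniz_alg scale br \<longleftrightarrow>
     vector_space scale \<and>
     (\<forall>x y z. br (x + y) z = br x z + br y z) \<and>
     (\<forall>x y z. br x (y + z) = br x y + br x z) \<and>
     (\<forall>c x y. br (scale c x) y = scale c (br x y)) \<and>
     (\<forall>c x y. br x (scale c y) = scale c (br x y)) \<and>
     (\<forall>x y z. br (br x y) z = br x (br y z) + br (br x z) y)"

definition leib_hom :: "('k::field \<Rightarrow> 'L::ab_group_add \<Rightarrow> 'L) \<Rightarrow> ('L \<Rightarrow> 'L \<Rightarrow> 'L) \<Rightarrow> 'k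
      \<Rightarrow> ('a, 'k) kalg \<Rightarrow> 'a \<Rightarrow> ('L \<Rightarrow> 'a) \<Rightarrow> bool" where
  "leib_hom scale br k A q f \<longleftrightarrow>
     (\<forall>x. f x \<in> inv_set A q) \<and>
     (\<forall>x y. f (x + y) = aadd A (f x) (f y)) \<and>
     (\<forall>c x. f (scale c x) = asmul A c (f x)) \<and>
     (\<forall>x y. f (br x y) = br4 A q k (f x) (f y))"

text \<open>Enveloping^<4-th> algebra; the universal property is stated for all
  invariant algebras whose elements live in the type 'b (the theorem is
  polymorphic in 'b, so this covers every invariant algebra).\<close>
definition enveloping4 ::
  "('k::field \<Rightarrow> 'L::ab_group_add \<Rightarrow> 'L) \<Rightarrow> ('L \<Rightarrow> 'L \<Rightarrow> 'L) \<Rightarrow> 'k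
   \<Rightarrow> ('u, 'k) kalg \<Rightarrow> 'u \<Rightarrow> ('L \<Rightarrow> 'u) \<Rightarrow> 'b itself \<Rightarrow> bool" where
  "enveloping4 scale br k U qU i (_ :: 'b itself) \<longleftrightarrow>
     invariant_alg U qU \<and>
     leib_hom scale br k U qU i \<and>
     (\<forall>(A :: ('b, 'k) kalg) q f. invariant_alg A q \<and> leib_hom scale br k A q f \<longrightarrow>
        (\<exists>f'. inv_hom U qU A q f' \<and> (\<forall>x. f x = f' (i x)) \<and>
              (\<forall>g. inv_hom U qU A q g \<and> (\<forall>x. f x = g (i x)) \<longrightarrow>
                   (\<forall>u\<in>inv_set U qU. g u = f' u))))"

definition is_ideal :: "('a, 'k::field) kalg \<Rightarrow> 'a set \<Rightarrow> bool" where
  "is_ideal A I \<longleftrightarrow> I \<subseteq> acar A \<and> azero A \<in> I \<and>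
     (\<forall>a\<in>I. \<forall>b\<in>I. aadd A a b \<in> I) \<and> (\<forall>c. \<forall>a\<in>I. asmul A c a \<in> I) \<and>
     (\<forall>a\<in>I. \<forall>r\<in>acar A. amul A r a \<in> I \<and> amul A a r \<in> I)"

definition gen_ideal :: "('a, 'k::field) kalg \<Rightarrow> 'a set \<Rightarrow> 'a set" where
  "gen_ideal A S = \<Inter>{I. is_ideal A I \<and> S \<subseteq> I}"

definition coset :: "('a, 'k::field) kalg \<Rightarrow> 'a set \<Rightarrow> 'a \<Rightarrow> 'a set" where
  "coset A I a = {aadd A a i | i. i \<in> I}"

definition rep :: "'a set \<Rightarrow> 'a" where
  "rep C = (SOME a. a \<in> C)"

definition quot_alg :: "('a, 'k::field) kalg \<Rightarrow> 'a set \<Rightarrow> ('a set, 'k) kalg" where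
  "quot_alg A I =
     \<lparr> acar = {coset A I a | a. a \<in> acar A},
       aadd = (\<lambda>C D. coset A I (aadd A (rep C) (rep D))),
       azero = coset A I (azero A),
       amul = (\<lambda>C D. coset A I (amul A (rep C) (rep D))),
       aone = coset A I (aone A),
       asmul = (\<lambda>c C. coset A I (asmul A c (rep C))) \<rparr>"

text \<open>Letters: None is q~, Some x (x \<in> X) is the basis vector x. T(V) is realised as
  the free associative algebra on these letters: finitely supported 'k-valued
  functions on words.\<close>
definition tens_alg :: "'L set \<Rightarrow> ('L option list \<Rightarrow> 'k::field, 'k) kalg" where
  "tens_alg X =
     \<lparr> acar = {p. finite {w. p w \<noteq> 0} \<and> (\<forall>w. p w \<noteq> 0 \<longrightarrow> set w \<subseteq> insert None (Some ` X))},
       aadd = (\<lambda>p r w. p w + r w),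
       azero = (\<lambda>w. 0),
       amul = (\<lambda>p r w. \<Sum>n\<in>{0..length w}. p (take n w) * r (drop n w)),
       aone = (\<lambda>w. if w = [] then 1 else 0),
       asmul = (\<lambda>c p w. c * p w) \<rparr>"

definition letter :: "'L option \<Rightarrow> 'L option list \<Rightarrow> 'k::field" where
  "letter a = (\<lambda>w. if w = [a] then 1 else 0)"

definition qtil :: "'L option list \<Rightarrow> 'k::field" where
  "qtil = letter None"

definition I_free :: "'L set \<Rightarrow> ('L option list \<Rightarrow> 'k::field) set" where
  "I_free X = gen_ideal (tens_alg X)
     ({asub (tens_alg X) (amul (tens_alg X) qtil qtil) qtil} \<union>
      {asub (tens_alg X) (amul (tens_alg X) qtil (amul (tens_alg X) a qtil)) (amul (tens_alg X) qtil a)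
        | a. a \<in> acar (tens_alg X)})"

definition A_hat :: "'L set \<Rightarrow> (('L option list \<Rightarrow> 'k::field) set, 'k) kalg" where
  "A_hat X = quot_alg (tens_alg X) (I_free X)"

definition q_hat :: "'L set \<Rightarrow> ('L option list \<Rightarrow> 'k::field) set" where
  "q_hat X = coset (tens_alg X) (I_free X) qtil"

definition i_hat :: "'L set \<Rightarrow> 'L \<Rightarrow> ('L option list \<Rightarrow> 'k::field) set" where
  "i_hat X x = coset (tens_alg X) (I_free X) (letter (Some x))"

text \<open>The linear extension x \<mapsto> x^ of i^ to L: if x = \<Sum> c_b b (b \<in> X) then
  x^ = (\<Sum> c_b b) + I, where \<Sum> c_b b is taken in V \<subseteq> T(V).\<close>
definition hat :: "('k::field \<Rightarrow> 'L::ab_group_add \<Rightarrow> 'L) \<Rightarrow> 'L set \<Rightarrow> 'L \<Rightarrow> ('L option list \<Rightarrow> 'k) set" where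
  "hat scale X x = coset (tens_alg X) (I_free X)
     (\<lambda>w. case w of [Some b] \<Rightarrow> module.representation scale X x b | _ \<Rightarrow> 0)"

definition R_ideal :: "('k::field \<Rightarrow> 'L::ab_group_add \<Rightarrow> 'L) \<Rightarrow> ('L \<Rightarrow> 'L \<Rightarrow> 'L) \<Rightarrow> 'k \<Rightarrow> 'L set
     \<Rightarrow> ('L option list \<Rightarrow> 'k) set set" where
  "R_ideal scale br k X = gen_ideal (A_hat X)
     {asub (A_hat X) (hat scale X (br x y)) (br4 (A_hat X) (q_hat X) k (hat scale X x) (hat scale X y))
       | x y. True}"

definition U_env :: "('k::field \<Rightarrow> 'L::ab_group_add \<Rightarrow> 'L) \<Rightarrow> ('L \<Rightarrow> 'L \<Rightarrow> 'L) \<Rightarrow> 'k \<Rightarrow> 'L set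
     \<Rightarrow> (('L option list \<Rightarrow> 'k) set set, 'k) kalg" where
  "U_env scale br k X = quot_alg (A_hat X) (R_ideal scale br k X)"

definition q_bar :: "('k::field \<Rightarrow> 'L::ab_group_add \<Rightarrow> 'L) \<Rightarrow> ('L \<Rightarrow> 'L \<Rightarrow> 'L) \<Rightarrow> 'k \<Rightarrow> 'L set
     \<Rightarrow> ('L option list \<Rightarrow> 'k) set set" where
  "q_bar scale br k X = coset (A_hat X) (R_ideal scale br k X) (q_hat X)"

definition i_env :: "('k::field \<Rightarrow> 'L::ab_group_add \<Rightarrow> 'L) \<Rightarrow> ('L \<Rightarrow> 'L \<Rightarrow> 'L) \<Rightarrow> 'k \<Rightarrow> 'L set
     \<Rightarrow> 'L \<Rightarrow> ('L option list \<Rightarrow> 'k) set set" where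
  "i_env scale br k X x = coset (A_hat X) (R_ideal scale br k X) (hat scale X x)"

end

theory Submission
  imports Defs "HOL-Algebra.Ring"
begin


definition R_of :: "('a,'k::field) kalg \<Rightarrow> 'a ring" where
 "R_of A = \<lparr>carrier = acar A, monoid.mult = amul A, one = aone A, zero = azero A, add = aadd A\<rparr>"

lemma R_of_simps[simp]: "carrier (R_of A) = acar A" "monoid.mult (R_of A) = amul A"
  "one (R_of A) = aone A" "zero (R_of A) = azero A" "add (R_of A) = aadd A"
  by (simp_all add: R_of_def)

locale kalg = fixes A :: "('a,'k::field) kalg" assumes kalg: "is_kalg A"
begin

lemma ax1: "azero A \<in> acar A"
  using kalg unfolding is_kalg_def by (elim conjE) assumption
lemma ax2: "aone A \<in> acar A"
  using kalg unfolding is_kalg_def by (elim conjE) assumption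
lemma ax3: "\<forall>a\<in>acar A. \<forall>b\<in>acar A. aadd A a b \<in> acar A \<and> amul A a b \<in> acar A"
  using kalg unfolding is_kalg_def by (elim conjE) assumption
lemma ax4: "\<forall>c. \<forall>a\<in>acar A. asmul A c a \<in> acar A"
  using kalg unfolding is_kalg_def by (elim conjE) assumption
lemma ax5: "\<forall>a\<in>acar A. \<forall>b\<in>acar A. \<forall>c\<in>acar A. aadd A (aadd A a b) c = aadd A a (aadd A b c)"
  using kalg unfolding is_kalg_def by (elim conjE) assumption
lemma ax6: "\<forall>a\<in>acar A. \<forall>b\<in>acar A. aadd A a b = aadd A b a"
  using kalg unfolding is_kalg_def by (elim conjE) assumption
lemma ax7: "\<forall>a\<in>acar A. aadd A a (azero A) = a"
  using kalg unfolding is_kalg_def by (elim conjE) assumption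
lemma ax8: "\<forall>a\<in>acar A. aadd A a (asmul A (-1) a) = azero A"
  using kalg unfolding is_kalg_def by (elim conjE) assumption
lemma ax9: "\<forall>a\<in>acar A. asmul A 1 a = a"
  using kalg unfolding is_kalg_def by (elim conjE) assumption
lemma ax10: "\<forall>c d. \<forall>a\<in>acar A. asmul A (c * d) a = asmul A c (asmul A d a)"
  using kalg unfolding is_kalg_def by (elim conjE) assumption
lemma ax11: "\<forall>c d. \<forall>a\<in>acar A. asmul A (c + d) a = aadd A (asmul A c a) (asmul A d a)"
  using kalg unfolding is_kalg_def by (elim conjE) assumption
lemma ax12: "\<forall>c. \<forall>a\<in>acar A. \<forall>b\<in>acar A. asmul A c (aadd A a b) = aadd A (asmul A c a) (asmul A c b)"
  using kalg unfolding is_kalg_def by (elim conjE) assumption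
lemma ax13: "\<forall>a\<in>acar A. \<forall>b\<in>acar A. \<forall>c\<in>acar A. amul A (amul A a b) c = amul A a (amul A b c)"
  using kalg unfolding is_kalg_def by (elim conjE) assumption
lemma ax14: "\<forall>a\<in>acar A. amul A (aone A) a = a \<and> amul A a (aone A) = a"
  using kalg unfolding is_kalg_def by (elim conjE) assumption
lemma ax15: "\<forall>a\<in>acar A. \<forall>b\<in>acar A. \<forall>c\<in>acar A.
        amul A a (aadd A b c) = aadd A (amul A a b) (amul A a c) \<and>
        amul A (aadd A a b) c = aadd A (amul A a c) (amul A b c)"
  using kalg unfolding is_kalg_def by (elim conjE) assumption
lemma ax16: "\<forall>c. \<forall>a\<in>acar A. \<forall>b\<in>acar A.
        asmul A c (amul A a b) = amul A (asmul A c a) b \<and>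
        asmul A c (amul A a b) = amul A a (asmul A c b)"
  using kalg unfolding is_kalg_def by (elim conjE) assumption
lemmas ax = ax1 ax2 ax3 ax4 ax5 ax6 ax7 ax8 ax9 ax10 ax11 ax12 ax13 ax14 ax15 ax16

lemma zero_c[simp,intro]: "azero A \<in> acar A" and one_c[simp,intro]: "aone A \<in> acar A"
  using ax by auto
lemma add_c[simp,intro]: "a \<in> acar A \<Longrightarrow> b \<in> acar A \<Longrightarrow> aadd A a b \<in> acar A"
  and mul_c[simp,intro]: "a \<in> acar A \<Longrightarrow> b \<in> acar A \<Longrightarrow> amul A a b \<in> acar A"
  and smul_c[simp,intro]: "a \<in> acar A \<Longrightarrow> asmul A c a \<in> acar A"
  using ax(3,4) by auto
lemma add_assoc: "a \<in> acar A \<Longrightarrow> b \<in> acar A \<Longrightarrow> z \<in> acar A \<Longrightarrow> aadd A (aadd A a b) z = aadd A a (aadd A b z)"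
  using ax(5) by blast
lemma add_comm: "a \<in> acar A \<Longrightarrow> b \<in> acar A \<Longrightarrow> aadd A a b = aadd A b a"
  using ax(6) by blast
lemma add_zero[simp]: "a \<in> acar A \<Longrightarrow> aadd A a (azero A) = a"
  using ax(7) by blast
lemma add_neg: "a \<in> acar A \<Longrightarrow> aadd A a (asmul A (-1) a) = azero A"
  using ax(8) by blast
lemma smul_one[simp]: "a \<in> acar A \<Longrightarrow> asmul A 1 a = a"
  using ax(9) by blast
lemma smul_smul: "a \<in> acar A \<Longrightarrow> asmul A (c * d) a = asmul A c (asmul A d a)"
  using ax(10) by blast
lemma smul_ldistr: "a \<in> acar A \<Longrightarrow> asmul A (c + d) a = aadd A (asmul A c a) (asmul A d a)"
  using ax(11) by blast
lemma smul_rdistr: "a \<in> acar A \<Longrightarrow> b \<in> acar A \<Longrightarrow> asmul A c (aadd A a b) = aadd A (asmul A c a) (asmul A c b)"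
  using ax(12) by blast
lemma mul_assoc: "a \<in> acar A \<Longrightarrow> b \<in> acar A \<Longrightarrow> z \<in> acar A \<Longrightarrow> amul A (amul A a b) z = amul A a (amul A b z)"
  using ax(13) by blast
lemma mul_one[simp]: "a \<in> acar A \<Longrightarrow> amul A a (aone A) = a"
  and one_mul[simp]: "a \<in> acar A \<Longrightarrow> amul A (aone A) a = a"
  using ax(14) by blast+
lemma rdistr: "a \<in> acar A \<Longrightarrow> b \<in> acar A \<Longrightarrow> z \<in> acar A \<Longrightarrow> amul A a (aadd A b z) = aadd A (amul A a b) (amul A a z)"
  using ax(15) by blast
lemma ldistr: "a \<in> acar A \<Longrightarrow> b \<in> acar A \<Longrightarrow> z \<in> acar A \<Longrightarrow> amul A (aadd A a b) z = aadd A (amul A a z) (amul A b z)"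
  using ax(15) by blast
lemma smul_mul_l: "a \<in> acar A \<Longrightarrow> b \<in> acar A \<Longrightarrow> amul A (asmul A c a) b = asmul A c (amul A a b)"
  using ax(16) by metis
lemma smul_mul_r: "a \<in> acar A \<Longrightarrow> b \<in> acar A \<Longrightarrow> amul A a (asmul A c b) = asmul A c (amul A a b)"
  using ax(16) by metis

lemma zero_add[simp]: "a \<in> acar A \<Longrightarrow> aadd A (azero A) a = a"
  using add_comm add_zero by simp

lemma add_lcomm: "a \<in> acar A \<Longrightarrow> b \<in> acar A \<Longrightarrow> z \<in> acar A \<Longrightarrow> aadd A a (aadd A b z) = aadd A b (aadd A a z)"
  by (metis add_assoc add_comm)

lemma idem_zero: "x \<in> acar A \<Longrightarrow> aadd A x x = x \<Longrightarrow> x = azero A"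
proof -
  assume x: "x \<in> acar A" and h: "aadd A x x = x"
  have "x = aadd A x (aadd A x (asmul A (-1) x))" using x by (simp add: add_neg)
  also have "... = aadd A (aadd A x x) (asmul A (-1) x)" using x by (simp add: add_assoc)
  also have "... = azero A" using x h by (simp add: add_neg)
  finally show ?thesis .
qed

lemma zero_smul[simp]: "a \<in> acar A \<Longrightarrow> asmul A 0 a = azero A"
  by (rule idem_zero) (simp_all add: smul_ldistr[symmetric])

lemma smul_zero[simp]: "asmul A c (azero A) = azero A"
proof -
  have "asmul A c (azero A) = asmul A c (asmul A 0 (azero A))" by simp
  also have "... = asmul A (c * 0) (azero A)" by (simp only: smul_smul zero_c)
  finally show ?thesis by simp
qed

lemma ring: "ring (R_of A)"
proof (rule ringI)
  show "abelian_group (R_of A)"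
    apply (rule abelian_groupI)
    apply (simp_all add: add_assoc add_comm add_lcomm)
    subgoal for x by (rule bexI[of _ "asmul A (-1) x"]) (simp_all add: add_comm[of "asmul A (-1) x" x] add_neg)
    done
  show "monoid (R_of A)"
    by (rule monoidI) (simp_all add: mul_assoc)
qed (simp_all add: rdistr ldistr)

end

sublocale kalg \<subseteq> R: ring "R_of A"
  rewrites "carrier (R_of A) = acar A" and "add (R_of A) = aadd A" and "monoid.mult (R_of A) = amul A"
    and "zero (R_of A) = azero A" and "one (R_of A) = aone A"
  by (rule ring) simp_all

context kalg begin

lemma ainv_eq: "a \<in> acar A \<Longrightarrow> a_inv (R_of A) a = asmul A (-1) a"
  apply (rule R.add.inv_equality) 
  by (simp_all add: add_comm[of "asmul A (-1) a" a] add_neg)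

lemma asub_eq: "a \<in> acar A \<Longrightarrow> b \<in> acar A \<Longrightarrow> asub A a b = a_minus (R_of A) a b"
  by (simp add: asub_def a_minus_def ainv_eq)

lemma sub_c[simp,intro]: "a \<in> acar A \<Longrightarrow> b \<in> acar A \<Longrightarrow> asub A a b \<in> acar A"
  by (simp add: asub_def)

lemma mul_zero[simp]: "a \<in> acar A \<Longrightarrow> amul A a (azero A) = azero A"
  and zero_mul[simp]: "a \<in> acar A \<Longrightarrow> amul A (azero A) a = azero A"
  using R.r_null R.l_null by auto

lemma sub_self[simp]: "a \<in> acar A \<Longrightarrow> asub A a a = azero A"
  using add_neg by (simp add: asub_def)

lemma sub_alt: "a \<in> acar A \<Longrightarrow> b \<in> acar A \<Longrightarrow> asub A a b = aadd A a (a_inv (R_of A) b)"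
  by (simp add: asub_def ainv_eq)

lemma sub_add_cancel2: "a \<in> acar A \<Longrightarrow> b \<in> acar A \<Longrightarrow> aadd A b (asub A a b) = a"
  by (simp add: sub_alt R.a_lcomm[of b a] R.r_neg)

lemma sub_zero_iff: "a \<in> acar A \<Longrightarrow> b \<in> acar A \<Longrightarrow> asub A a b = azero A \<longleftrightarrow> a = b"
  using sub_add_cancel2[of a b] by auto

end


definition khom :: "('a,'k::field) kalg \<Rightarrow> ('b,'k) kalg \<Rightarrow> ('a \<Rightarrow> 'b) \<Rightarrow> bool" where
 "khom A B \<phi> \<longleftrightarrow> (\<forall>a\<in>acar A. \<phi> a \<in> acar B) \<and>
    (\<forall>a\<in>acar A. \<forall>b\<in>acar A. \<phi> (aadd A a b) = aadd B (\<phi> a) (\<phi> b)) \<and>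
    (\<forall>c. \<forall>a\<in>acar A. \<phi> (asmul A c a) = asmul B c (\<phi> a)) \<and>
    (\<forall>a\<in>acar A. \<forall>b\<in>acar A. \<phi> (amul A a b) = amul B (\<phi> a) (\<phi> b)) \<and>
    \<phi> (aone A) = aone B"

context kalg begin


lemma smul_sub: "a \<in> acar A \<Longrightarrow> b \<in> acar A \<Longrightarrow> asmul A c (asub A a b) = asub A (asmul A c a) (asmul A c b)"
  by (simp add: asub_def smul_rdistr smul_smul[symmetric] mult.commute)


lemma add_sub_cancel: "b \<in> acar A \<Longrightarrow> i \<in> acar A \<Longrightarrow> asub A (aadd A b i) b = i"
  by (simp add: sub_alt R.a_comm[of b i] R.a_assoc R.r_neg)

lemma sub_swap: "a \<in> acar A \<Longrightarrow> b \<in> acar A \<Longrightarrow> a_inv (R_of A) (asub A a b) = asub A b a"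
  by (simp add: sub_alt R.minus_add R.minus_minus R.a_comm)

lemma smul_minus1: "a \<in> acar A \<Longrightarrow> asmul A (-1) a = a_inv (R_of A) a"
  by (simp add: ainv_eq)

end

lemma khomD:
  assumes "khom A B \<phi>"
  shows "a \<in> acar A \<Longrightarrow> \<phi> a \<in> acar B"
    and "a \<in> acar A \<Longrightarrow> b \<in> acar A \<Longrightarrow> \<phi> (aadd A a b) = aadd B (\<phi> a) (\<phi> b)"
    and "a \<in> acar A \<Longrightarrow> \<phi> (asmul A c a) = asmul B c (\<phi> a)"
    and "a \<in> acar A \<Longrightarrow> b \<in> acar A \<Longrightarrow> \<phi> (amul A a b) = amul B (\<phi> a) (\<phi> b)"
    and "\<phi> (aone A) = aone B"
  using assms unfolding khom_def by blast+

lemma khom_zero: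
  assumes "kalg A" "kalg B" "khom A B \<phi>"
  shows "\<phi> (azero A) = azero B"
proof -
  interpret A: kalg A by fact
  interpret B: kalg B by fact
  show ?thesis using khomD(3)[OF assms(3), of "aone A" 0] khomD(5)[OF assms(3)] by simp
qed

lemma khom_sub:
  assumes "kalg A" "kalg B" "khom A B \<phi>" "a \<in> acar A" "b \<in> acar A"
  shows "\<phi> (asub A a b) = asub B (\<phi> a) (\<phi> b)"
proof -
  interpret A: kalg A by fact
  interpret B: kalg B by fact
  show ?thesis using khomD[OF assms(3)] assms(4,5) by (simp add: asub_def)
qed

lemma khom_br4:
  assumes "kalg A" "kalg B" "khom A B \<phi>" "a \<in> acar A" "b \<in> acar A" "q \<in> acar A"
  shows "\<phi> (br4 A q k a b) = br4 B (\<phi> q) k (\<phi> a) (\<phi> b)"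
proof -
  interpret A: kalg A by fact
  interpret B: kalg B by fact
  note h = khomD[OF assms(3)] khom_sub[OF assms(1-3)]
  show ?thesis using assms(4-6) unfolding br4_def by (simp add: h)
qed

lemma khom_comp:
  assumes "khom A B \<phi>" "khom B C \<psi>"
  shows "khom A C (\<psi> \<circ> \<phi>)"
  using assms unfolding khom_def by auto

lemma (in kalg) carrier_ideal: "is_ideal A (acar A)"
  unfolding is_ideal_def by auto

lemma (in kalg) gen_ideal_ideal: "S \<subseteq> acar A \<Longrightarrow> is_ideal A (gen_ideal A S)"
  unfolding gen_ideal_def is_ideal_def
  apply (intro conjI)
  using carrier_ideal unfolding is_ideal_def apply blast
     apply blast
    apply blast
   apply blast
  apply blast
  done

lemma gen_ideal_sup: "S \<subseteq> gen_ideal A S"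
  unfolding gen_ideal_def by blast

lemma gen_ideal_min: "is_ideal A J \<Longrightarrow> S \<subseteq> J \<Longrightarrow> gen_ideal A S \<subseteq> J"
  unfolding gen_ideal_def by blast

lemma kernel_ideal:
  assumes "kalg A" "kalg B" "khom A B \<phi>"
  shows "is_ideal A {a\<in>acar A. \<phi> a = azero B}"
proof -
  interpret A: kalg A by fact
  interpret B: kalg B by fact
  note h = khomD[OF assms(3)] khom_zero[OF assms]
  show ?thesis unfolding is_ideal_def by (auto simp: h)
qed

locale kideal = kalg + fixes I assumes ideal: "is_ideal A I"
begin

lemma I_sub: "I \<subseteq> acar A" and I_zero: "azero A \<in> I"
  and I_add: "a \<in> I \<Longrightarrow> b \<in> I \<Longrightarrow> aadd A a b \<in> I"
  and I_smul: "a \<in> I \<Longrightarrow> asmul A c a \<in> I"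
  and I_mul_l: "a \<in> I \<Longrightarrow> r \<in> acar A \<Longrightarrow> amul A r a \<in> I"
  and I_mul_r: "a \<in> I \<Longrightarrow> r \<in> acar A \<Longrightarrow> amul A a r \<in> I"
  using ideal unfolding is_ideal_def by blast+

lemma I_car: "a \<in> I \<Longrightarrow> a \<in> acar A" using I_sub by blast

lemma I_inv: "a \<in> I \<Longrightarrow> a_inv (R_of A) a \<in> I"
  using I_smul[of a "-1"] by (simp add: ainv_eq I_car)

lemma I_sub_closed: "a \<in> I \<Longrightarrow> b \<in> I \<Longrightarrow> asub A a b \<in> I"
  by (simp add: asub_def I_add I_smul)

lemma coset_self: "a \<in> acar A \<Longrightarrow> a \<in> coset A I a"
  unfolding coset_def using I_zero by force

lemma coset_sub: "a \<in> acar A \<Longrightarrow> coset A I a \<subseteq> acar A"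
  unfolding coset_def using I_car by auto

lemma coset_eq_iff:
  assumes a: "a \<in> acar A" and b: "b \<in> acar A"
  shows "coset A I a = coset A I b \<longleftrightarrow> asub A a b \<in> I"
proof
  assume "coset A I a = coset A I b"
  then have "a \<in> coset A I b" using coset_self[OF a] by simp
  then obtain i where i: "i \<in> I" "a = aadd A b i" unfolding coset_def by auto
  have "asub A a b = i" using i a b I_car[OF i(1)]
    by (simp add: add_sub_cancel)
  thus "asub A a b \<in> I" using i by simp
next
  assume d: "asub A a b \<in> I"
  have d': "asub A b a \<in> I" using I_inv[OF d] a b
    by (simp add: sub_swap)
  show "coset A I a = coset A I b"
  proof
    show "coset A I a \<subseteq> coset A I b"
    proof
      fix x assume "x \<in> coset A I a"
      then obtain i where i: "i \<in> I" "x = aadd A a i" unfolding coset_def by auto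
      have "x = aadd A b (aadd A (asub A a b) i)" using i a b I_car[OF i(1)]
        by (simp add: add_assoc[symmetric] sub_add_cancel2)
      thus "x \<in> coset A I b" unfolding coset_def using I_add[OF d i(1)] by blast
    qed
  next
    show "coset A I b \<subseteq> coset A I a"
    proof
      fix x assume "x \<in> coset A I b"
      then obtain i where i: "i \<in> I" "x = aadd A b i" unfolding coset_def by auto
      have "x = aadd A a (aadd A (asub A b a) i)" using i a b I_car[OF i(1)]
        by (simp add: add_assoc[symmetric] sub_add_cancel2)
      thus "x \<in> coset A I a" unfolding coset_def using I_add[OF d' i(1)] by blast
    qed
  qed
qed

lemma rep_coset: "a \<in> acar A \<Longrightarrow> rep (coset A I a) \<in> acar A \<and> coset A I (rep (coset A I a)) = coset A I a"
proof -
  assume a: "a \<in> acar A"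
  have r: "rep (coset A I a) \<in> coset A I a" unfolding rep_def using coset_self[OF a] by (rule someI)
  then obtain i where i: "i \<in> I" "rep (coset A I a) = aadd A a i" unfolding coset_def by auto
  have rc: "rep (coset A I a) \<in> acar A" using r coset_sub[OF a] by blast
  have "asub A (rep (coset A I a)) a = i" using i a I_car[OF i(1)]
    by (simp add: add_sub_cancel)
  with i rc a show ?thesis using coset_eq_iff by simp
qed

abbreviation "Q \<equiv> quot_alg A I"
abbreviation "\<pi> \<equiv> coset A I"

lemma Q_car: "acar Q = \<pi> ` acar A"
  unfolding quot_alg_def by auto

lemma pi_car[simp,intro]: "a \<in> acar A \<Longrightarrow> \<pi> a \<in> acar Q"
  using Q_car by blast

lemma cong_add: "a \<in> acar A \<Longrightarrow> b \<in> acar A \<Longrightarrow> a' \<in> acar A \<Longrightarrow> b' \<in> acar A \<Longrightarrow>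
  asub A a a' \<in> I \<Longrightarrow> asub A b b' \<in> I \<Longrightarrow> asub A (aadd A a b) (aadd A a' b') \<in> I"
proof -
  assume as: "a \<in> acar A" "b \<in> acar A" "a' \<in> acar A" "b' \<in> acar A" "asub A a a' \<in> I" "asub A b b' \<in> I"
  have "asub A (aadd A a b) (aadd A a' b') = aadd A (asub A a a') (asub A b b')"
    using as(1-4) by (simp add: sub_alt R.minus_add R.a_ac)
  thus ?thesis using I_add as by simp
qed

lemma cong_mul: "a \<in> acar A \<Longrightarrow> b \<in> acar A \<Longrightarrow> a' \<in> acar A \<Longrightarrow> b' \<in> acar A \<Longrightarrow>
  asub A a a' \<in> I \<Longrightarrow> asub A b b' \<in> I \<Longrightarrow> asub A (amul A a b) (amul A a' b') \<in> I"
proof -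
  assume as: "a \<in> acar A" "b \<in> acar A" "a' \<in> acar A" "b' \<in> acar A" "asub A a a' \<in> I" "asub A b b' \<in> I"
  have "asub A (amul A a b) (amul A a' b') = aadd A (amul A (asub A a a') b) (amul A a' (asub A b b'))"
    using as(1-4) by (simp add: sub_alt R.minus_add R.a_ac R.l_distr R.r_distr R.l_minus R.r_minus R.r_neg1 R.r_neg2)
  thus ?thesis using I_add I_mul_l I_mul_r as by simp
qed

lemma cong_smul: "a \<in> acar A \<Longrightarrow> a' \<in> acar A \<Longrightarrow>
  asub A a a' \<in> I \<Longrightarrow> asub A (asmul A c a) (asmul A c a') \<in> I"
  using I_smul smul_sub by metis

lemma rep_cong: "a \<in> acar A \<Longrightarrow> asub A (rep (\<pi> a)) a \<in> I"
  using rep_coset coset_eq_iff by metis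

lemma rep_car: "a \<in> acar A \<Longrightarrow> rep (\<pi> a) \<in> acar A"
  using rep_coset by blast

lemma Q_add[simp]: "a \<in> acar A \<Longrightarrow> b \<in> acar A \<Longrightarrow> aadd Q (\<pi> a) (\<pi> b) = \<pi> (aadd A a b)"
  unfolding quot_alg_def using coset_eq_iff cong_add rep_cong rep_car by simp

lemma Q_mul[simp]: "a \<in> acar A \<Longrightarrow> b \<in> acar A \<Longrightarrow> amul Q (\<pi> a) (\<pi> b) = \<pi> (amul A a b)"
  unfolding quot_alg_def using coset_eq_iff cong_mul rep_cong rep_car by simp

lemma Q_smul[simp]: "a \<in> acar A \<Longrightarrow> asmul Q c (\<pi> a) = \<pi> (asmul A c a)"
  unfolding quot_alg_def using coset_eq_iff cong_smul rep_cong rep_car by simp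

lemma Q_zero[simp]: "azero Q = \<pi> (azero A)" and Q_one[simp]: "aone Q = \<pi> (aone A)"
  unfolding quot_alg_def by simp_all

lemma ball_img: "(\<forall>x\<in>f ` S. P x) = (\<forall>a\<in>S. P (f a))" by auto

lemma Q_kalg: "is_kalg Q"
  unfolding is_kalg_def Q_car ball_img
  by (simp add: add_lcomm add_assoc add_comm add_neg smul_smul smul_ldistr smul_rdistr mul_assoc
        rdistr ldistr smul_mul_l smul_mul_r)

lemma pi_khom: "khom A Q \<pi>"
  unfolding khom_def by simp

lemma Q_sub[simp]: "a \<in> acar A \<Longrightarrow> b \<in> acar A \<Longrightarrow> asub Q (\<pi> a) (\<pi> b) = \<pi> (asub A a b)"
  by (simp add: asub_def)

lemma pi_eq_iff: "a \<in> acar A \<Longrightarrow> b \<in> acar A \<Longrightarrow> \<pi> a = \<pi> b \<longleftrightarrow> asub A a b \<in> I"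
  by (rule coset_eq_iff)

lemma pi_zero_iff: "a \<in> acar A \<Longrightarrow> \<pi> a = \<pi> (azero A) \<longleftrightarrow> a \<in> I"
  using pi_eq_iff[of a "azero A"] by (simp add: asub_def)

lemma induced:
  assumes B: "kalg B" and h: "khom A B \<phi>" and z: "\<forall>i\<in>I. \<phi> i = azero B"
  shows "khom Q B (\<lambda>C. \<phi> (rep C))" "\<And>a. a \<in> acar A \<Longrightarrow> \<phi> (rep (\<pi> a)) = \<phi> a"
proof -
  interpret B: kalg B by fact
  show e: "\<phi> (rep (\<pi> a)) = \<phi> a" if a: "a \<in> acar A" for a
  proof -
    have "asub B (\<phi> (rep (\<pi> a))) (\<phi> a) = azero B"
      using khom_sub[OF kalg_axioms B h rep_car[OF a] a] z rep_cong[OF a] by simp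
    thus ?thesis using B.sub_zero_iff khomD(1)[OF h] rep_car a by blast
  qed
  show "khom Q B (\<lambda>C. \<phi> (rep C))"
    unfolding khom_def Q_car ball_img using e khomD[OF h] by simp
qed

end

lemma kideal_Q: "kideal A I \<Longrightarrow> kalg (quot_alg A I)"
  using kideal.Q_kalg kalg.intro by blast


definition supp :: "('w \<Rightarrow> 'k::zero) \<Rightarrow> 'w set" where "supp p = {w. p w \<noteq> 0}"

definition Lt :: "'L set \<Rightarrow> 'L option set" where "Lt X = insert None (Some ` X)"

definition tmul :: "('L option list \<Rightarrow> 'k::field) \<Rightarrow> ('L option list \<Rightarrow> 'k) \<Rightarrow> 'L option list \<Rightarrow> 'k" where
  "tmul p r = (\<lambda>w. \<Sum>n\<in>{0..length w}. p (take n w) * r (drop n w))"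

definition dl :: "'L option list \<Rightarrow> 'L option list \<Rightarrow> 'k::field" where
  "dl u = (\<lambda>v. if v = u then 1 else 0)"

lemma T_car:
  "acar (tens_alg X) = {p. finite (supp p) \<and> (\<forall>w\<in>supp p. set w \<subseteq> Lt X)}"
  unfolding tens_alg_def supp_def Lt_def by auto

lemma T_simps[simp]:
  "aadd (tens_alg X) = (\<lambda>p r w. p w + r w)"
  "azero (tens_alg X) = (\<lambda>w. 0)"
  "amul (tens_alg X) = tmul"
  "aone (tens_alg X) = dl []"
  "asmul (tens_alg X) = (\<lambda>c p w. c * p w)"
  unfolding tens_alg_def supp_def Lt_def tmul_def dl_def by (auto simp: fun_eq_iff)

lemma supp_add: "supp (\<lambda>w. (p::_\<Rightarrow>'k::field) w + r w) \<subseteq> supp p \<union> supp r"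
  unfolding supp_def by auto

lemma supp_smul: "supp (\<lambda>w. (c::'k::field) * p w) \<subseteq> supp p"
  unfolding supp_def by auto

lemma supp_tmul: "supp (tmul p r) \<subseteq> (\<lambda>(u,v). u @ v) ` (supp p \<times> supp r)"
proof
  fix w assume "w \<in> supp (tmul p r)"
  then have "(\<Sum>n\<in>{0..length w}. p (take n w) * r (drop n w)) \<noteq> 0" unfolding supp_def tmul_def by simp
  then obtain n where "p (take n w) * r (drop n w) \<noteq> 0"
    using sum.not_neutral_contains_not_neutral by blast
  then have "take n w \<in> supp p" "drop n w \<in> supp r" unfolding supp_def by auto
  thus "w \<in> (\<lambda>(u,v). u @ v) ` (supp p \<times> supp r)"
    by (metis (mono_tags, lifting) append_take_drop_id case_prod_conv mem_Sigma_iff rev_image_eqI)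
qed

lemma tmul_car:
  assumes "p \<in> acar (tens_alg X)" "r \<in> acar (tens_alg X)"
  shows "tmul p r \<in> acar (tens_alg X)"
proof -
  have f: "finite (supp (tmul p r))"
    using assms by (auto simp: T_car intro: finite_subset[OF supp_tmul])
  have "set w \<subseteq> Lt X" if w: "w \<in> supp (tmul p r)" for w
  proof -
    obtain u v where "u \<in> supp p" "v \<in> supp r" "w = u @ v" using supp_tmul[of p r] w by fast
    thus ?thesis using assms by (auto simp: T_car)
  qed
  thus ?thesis using f by (simp add: T_car)
qed

lemma tmul_assoc:
  fixes p r s :: "'L option list \<Rightarrow> 'k::field"
  shows "tmul (tmul p r) s = tmul p (tmul r s)"
proof
  fix w :: "'L option list"
  define L where "L = length w"
  define g where "g = (\<lambda>i j. p (take i w) * r (take j (drop i w)) * s (drop (i + j) w))"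
  have "tmul (tmul p r) s w = (\<Sum>k\<in>{..L}. (\<Sum>i\<in>{..k}. p (take i (take k w)) * r (drop i (take k w))) * s (drop k w))"
    unfolding tmul_def L_def atLeast0AtMost
    apply (rule sum.cong[OF refl])
    apply (rule arg_cong2[where f="(*)"])
     apply (rule sum.cong)
      apply (auto simp: min_def)
    done
  also have "... = (\<Sum>k\<in>{..L}. \<Sum>i\<in>{..k}. g i (k - i))"
    apply (rule sum.cong[OF refl])
    apply (simp add: sum_distrib_right g_def)
    apply (rule sum.cong[OF refl])
    apply (simp add: take_drop min_def)
    done
  also have "... = (\<Sum>(i,j)\<in>{(i,j). i+j \<le> L}. g i j)"
    by (rule sum.triangle_reindex_eq[symmetric])
  also have "{(i,j). i+j \<le> L} = Sigma {..L} (\<lambda>i. {..L-i})" by auto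
  also have "(\<Sum>(i,j)\<in>Sigma {..L} (\<lambda>i. {..L-i}). g i j) = (\<Sum>i\<in>{..L}. \<Sum>j\<in>{..L-i}. g i j)"
    by (rule sum.Sigma[symmetric]) auto
  also have "... = tmul p (tmul r s) w"
    unfolding tmul_def L_def g_def
    by (simp add: atLeast0AtMost sum_distrib_left mult.assoc add.commute)
  finally show "tmul (tmul p r) s w = tmul p (tmul r s) w" .
qed

lemma tmul_one_l: "tmul (dl []) r = r"
proof
  fix w
  have "tmul (dl []) r w = (\<Sum>n\<in>{0..length w}. if n = 0 then r w else 0)"
    unfolding tmul_def dl_def by (rule sum.cong) auto
  thus "tmul (dl []) r w = r w" by simp
qed

lemma tmul_one_r: "tmul p (dl []) = p"
proof
  fix w
  have "tmul p (dl []) w = (\<Sum>n\<in>{0..length w}. if n = length w then p w else 0)"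
    unfolding tmul_def dl_def by (rule sum.cong) auto
  thus "tmul p (dl []) w = p w" by simp
qed

lemma tmul_add_r: "tmul p (\<lambda>w. r w + s w) = (\<lambda>w. tmul p r w + tmul p s w)"
  unfolding tmul_def by (simp add: distrib_left sum.distrib)

lemma tmul_add_l: "tmul (\<lambda>w. p w + r w) s = (\<lambda>w. tmul p s w + tmul r s w)"
  unfolding tmul_def by (simp add: distrib_right sum.distrib)

lemma tmul_smul_l: "tmul (\<lambda>w. c * p w) r = (\<lambda>w. c * tmul p r w)"
  unfolding tmul_def by (simp add: sum_distrib_left mult.assoc)

lemma tmul_smul_r: "tmul p (\<lambda>w. c * r w) = (\<lambda>w. c * tmul p r w)"
  unfolding tmul_def by (simp add: sum_distrib_left mult.left_commute)

lemma supp_dl: "supp (dl u) = {u}"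
  unfolding dl_def supp_def by auto

lemma dl_car: "set u \<subseteq> Lt X \<Longrightarrow> dl u \<in> acar (tens_alg X)"
  by (simp add: T_car supp_dl)

lemma T_kalg: "is_kalg (tens_alg X)"
proof -
  have add: "p \<in> acar (tens_alg X) \<Longrightarrow> r \<in> acar (tens_alg X) \<Longrightarrow> (\<lambda>w. p w + r w) \<in> acar (tens_alg X)" for p r
    using supp_add[of p r] by (auto simp: T_car intro: finite_subset)
  have sm: "p \<in> acar (tens_alg X) \<Longrightarrow> (\<lambda>w. c * p w) \<in> acar (tens_alg X)" for p c
    using supp_smul[of c p] by (auto simp: T_car intro: finite_subset)
  have z: "(\<lambda>w. 0) \<in> acar (tens_alg X)" by (simp add: supp_def T_car)
  have o: "dl [] \<in> acar (tens_alg X)" by (rule dl_car) simp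
  show ?thesis
    unfolding is_kalg_def
    apply (simp only: T_simps(1-5))
    apply (intro conjI ballI allI)
    apply (simp_all add: add sm z o tmul_car algebra_simps tmul_assoc tmul_one_l tmul_one_r tmul_add_r tmul_add_l tmul_smul_l tmul_smul_r)
    done
qed

interpretation T: kalg "tens_alg X" by (rule kalg.intro, rule T_kalg)


lemma T_kalgI: "kalg (tens_alg X)" by (rule kalg.intro, rule T_kalg)

lemma tmul_dl_pt:
  fixes u v w :: "'L option list"
  shows "tmul (dl u) (dl v) w = (dl (u @ v) w :: 'k::field)"
proof -
  have key: "(take n w = u \<and> drop n w = v) \<longleftrightarrow> (n = length u \<and> w = u @ v)" if n: "n \<le> length w" for n
  proof
    assume h: "take n w = u \<and> drop n w = v"
    have "length u = n" using h n by auto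
    moreover have "w = u @ v" using h append_take_drop_id[of n w] by simp
    ultimately show "n = length u \<and> w = u @ v" by simp
  next
    assume "n = length u \<and> w = u @ v" thus "take n w = u \<and> drop n w = v" by simp
  qed
  have "tmul (dl u) (dl v) w = (\<Sum>n\<in>{0..length w}. if n = length u then (if w = u @ v then 1 else 0) else (0::'k))"
    unfolding tmul_def dl_def
    apply (intro sum.cong refl)
    subgoal for n using key[of n] by (cases "take n w = u"; cases "drop n w = v"; simp)
    done
  also have "... = dl (u @ v) w"
    by (simp add: sum.delta dl_def)
  finally show ?thesis .
qed

lemma tmul_dl: "tmul (dl u) (dl v) = dl (u @ v)"
  by (rule ext) (rule tmul_dl_pt)

lemma letter_dl: "letter a = dl [a]"
  unfolding letter_def dl_def by simp

lemma qtil_dl: "qtil = dl [None]"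
  unfolding qtil_def letter_dl ..

lemma dl_Cons: "dl (a # w) = tmul (dl [a]) (dl w)"
  by (simp add: tmul_dl)

lemma T_decomp:
  assumes p: "p \<in> acar (tens_alg X)" and w: "w \<in> supp p"
  shows "p = (\<lambda>v. (p(w := 0)) v + p w * dl w v)" "p(w := 0) \<in> acar (tens_alg X)"
    "supp (p(w := 0)) = supp p - {w}" "set w \<subseteq> Lt X"
proof -
  show "p = (\<lambda>v. (p(w := 0)) v + p w * dl w v)" by (rule ext) (simp add: dl_def)
  show s: "supp (p(w := 0)) = supp p - {w}" unfolding supp_def by auto
  show "p(w := 0) \<in> acar (tens_alg X)" using p unfolding T_car by (simp add: s)
  show "set w \<subseteq> Lt X" using p w unfolding T_car by auto
qed

lemma T_induct[consumes 1, case_names zero step]: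
  assumes p: "p \<in> acar (tens_alg X)"
    and z: "P (\<lambda>w. 0)"
    and st: "\<And>p c w. p \<in> acar (tens_alg X) \<Longrightarrow> set w \<subseteq> Lt X \<Longrightarrow> p w = 0 \<Longrightarrow> P p \<Longrightarrow> P (\<lambda>v. p v + c * dl w v)"
  shows "P p"
proof -
  have fin: "finite (supp p)" using p unfolding T_car by auto
  have "\<forall>p. p \<in> acar (tens_alg X) \<longrightarrow> supp p = S \<longrightarrow> P p" if "finite S" for S
    using that
  proof (induction S rule: finite_induct)
    case empty
    show ?case
    proof (intro allI impI)
      fix p :: "'a option list \<Rightarrow> 'b" assume "supp p = {}"
      then have "p = (\<lambda>w. 0)" unfolding supp_def by auto
      thus "P p" using z by simp
    qed
  next
    case (insert w F)
    show ?case
    proof (intro allI impI)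
      fix p :: "'a option list \<Rightarrow> 'b" assume p: "p \<in> acar (tens_alg X)" and s: "supp p = insert w F"
      have wp: "w \<in> supp p" using s by simp
      note d = T_decomp[OF p wp]
      have "supp (p(w := 0)) = F" using d(3) s insert(2) by auto
      then have "P (p(w := 0))" using insert(3) d(2) by blast
      then have "P (\<lambda>v. (p(w := 0)) v + p w * dl w v)" using st[OF d(2) d(4)] by simp
      thus "P p" using d(1) by simp
    qed
  qed
  thus ?thesis using fin p by blast
qed

lemma T_gen[consumes 1, case_names zero one letter add smul mul]:
  assumes p: "p \<in> acar (tens_alg X)"
    and z: "P (\<lambda>w. 0)" and o: "P (dl [])"
    and l: "\<And>a. a \<in> Lt X \<Longrightarrow> P (letter a)"
    and ad: "\<And>p r. p \<in> acar (tens_alg X) \<Longrightarrow> r \<in> acar (tens_alg X) \<Longrightarrow> P p \<Longrightarrow> P r \<Longrightarrow> P (\<lambda>w. p w + r w)"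
    and sm: "\<And>p c. p \<in> acar (tens_alg X) \<Longrightarrow> P p \<Longrightarrow> P (\<lambda>w. c * p w)"
    and mu: "\<And>p r. p \<in> acar (tens_alg X) \<Longrightarrow> r \<in> acar (tens_alg X) \<Longrightarrow> P p \<Longrightarrow> P r \<Longrightarrow> P (tmul p r)"
  shows "P p"
proof -
  have dlP: "set w \<subseteq> Lt X \<Longrightarrow> P (dl w)" for w
  proof (induction w)
    case Nil then show ?case using o by simp
  next
    case (Cons a w)
    have s1: "set [a] \<subseteq> Lt X" "set w \<subseteq> Lt X" using Cons.prems by auto
    have "P (dl [a])" using l[of a] s1 by (simp add: letter_dl)
    moreover have "P (dl w)" using Cons.IH s1 by simp
    ultimately have "P (tmul (dl [a]) (dl w))"
      using mu[OF dl_car[OF s1(1)] dl_car[OF s1(2)]] by simp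
    thus ?case by (subst dl_Cons)
  qed
  show ?thesis
  proof (rule T_induct[where P=P, OF p z])
    fix q and c :: 'b and w assume q: "q \<in> acar (tens_alg X)" "set w \<subseteq> Lt X" "P q"
    have "(\<lambda>v. c * dl w v) \<in> acar (tens_alg X)" using kalg.smul_c[OF T_kalgI dl_car[OF q(2)], of c] by simp
    moreover have "P (\<lambda>v. c * dl w v)" by (rule sm[OF dl_car[OF q(2)] dlP[OF q(2)]])
    ultimately show "P (\<lambda>v. q v + c * dl w v)" using ad[OF q(1)] q(3) by blast
  qed
qed


definition wprod :: "('b,'k::field) kalg \<Rightarrow> ('L option \<Rightarrow> 'b) \<Rightarrow> 'L option list \<Rightarrow> 'b" where
  "wprod B g w = foldr (\<lambda>a acc. amul B (g a) acc) w (aone B)"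

definition Phi :: "('b,'k::field) kalg \<Rightarrow> ('L option \<Rightarrow> 'b) \<Rightarrow> ('L option list \<Rightarrow> 'k) \<Rightarrow> 'b" where
  "Phi B g p = finsum (R_of B) (\<lambda>w. asmul B (p w) (wprod B g w)) (supp p)"

locale tmap = kalg B for B :: "('b,'k::field) kalg" + fixes g :: "'L option \<Rightarrow> 'b"
  assumes g_car: "g a \<in> acar B"
begin

lemma wprod_car[simp,intro]: "wprod B g w \<in> acar B"
  by (induction w) (simp_all add: wprod_def g_car)

lemma wprod_Nil[simp]: "wprod B g [] = aone B"
  by (simp add: wprod_def)

lemma wprod_Cons: "wprod B g (a # w) = amul B (g a) (wprod B g w)"
  by (simp add: wprod_def)

lemma wprod_app: "wprod B g (u @ v) = amul B (wprod B g u) (wprod B g v)"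
  by (induction u) (simp_all add: wprod_Cons mul_assoc g_car)

lemma fsum_smul:
  assumes "finite S" "\<forall>x\<in>S. f x \<in> acar B"
  shows "asmul B c (finsum (R_of B) f S) = finsum (R_of B) (\<lambda>x. asmul B c (f x)) S"
  using assms
proof (induction S rule: finite_induct)
  case empty then show ?case by simp
next
  case (insert x F)
  have fP: "f \<in> F \<rightarrow> acar B" using insert.prems by auto
  have gP: "(\<lambda>x. asmul B c (f x)) \<in> F \<rightarrow> acar B" using insert.prems by auto
  have "finsum (R_of B) f (insert x F) = aadd B (f x) (finsum (R_of B) f F)"
    using R.finsum_insert[OF insert.hyps fP] insert.prems by simp
  moreover have "finsum (R_of B) (\<lambda>x. asmul B c (f x)) (insert x F) = aadd B (asmul B c (f x)) (finsum (R_of B) (\<lambda>x. asmul B c (f x)) F)"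
    using R.finsum_insert[OF insert.hyps gP] insert.prems by simp
  ultimately show ?case using insert.IH insert.prems fP
    by (simp add: smul_rdistr R.finsum_closed)
qed

lemma Phi_eq:
  assumes "finite S" "supp p \<subseteq> S"
  shows "Phi B g p = finsum (R_of B) (\<lambda>w. asmul B (p w) (wprod B g w)) S"
  unfolding Phi_def
  apply (rule R.add.finprod_mono_neutral_cong_left[OF assms])
  unfolding supp_def by auto

lemma Phi_car[simp,intro]: "Phi B g p \<in> acar B"
  unfolding Phi_def by (rule R.finsum_closed) auto

lemma Phi_zero: "Phi B g (\<lambda>w. 0) = azero B"
  unfolding Phi_def supp_def by simp

lemma Phi_add:
  assumes p: "p \<in> acar (tens_alg X)" and r: "r \<in> acar (tens_alg X)"
  shows "Phi B g (\<lambda>w. p w + r w) = aadd B (Phi B g p) (Phi B g r)"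
proof -
  let ?S = "supp p \<union> supp r"
  have f: "finite ?S" using p r by (simp add: T_car)
  have "Phi B g (\<lambda>w. p w + r w) = finsum (R_of B) (\<lambda>w. asmul B (p w + r w) (wprod B g w)) ?S"
    using Phi_eq[OF f supp_add] by simp
  also have "... = finsum (R_of B) (\<lambda>w. aadd B (asmul B (p w) (wprod B g w)) (asmul B (r w) (wprod B g w))) ?S"
    by (simp add: smul_ldistr)
  also have "... = aadd B (finsum (R_of B) (\<lambda>w. asmul B (p w) (wprod B g w)) ?S) (finsum (R_of B) (\<lambda>w. asmul B (r w) (wprod B g w)) ?S)"
    by (rule R.finsum_addf) auto
  also have "... = aadd B (Phi B g p) (Phi B g r)"
    using Phi_eq[OF f, of p] Phi_eq[OF f, of r] by simp
  finally show ?thesis .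
qed

lemma Phi_smul:
  assumes p: "p \<in> acar (tens_alg X)"
  shows "Phi B g (\<lambda>w. c * p w) = asmul B c (Phi B g p)"
proof -
  have f: "finite (supp p)" using p by (simp add: T_car)
  have "Phi B g (\<lambda>w. c * p w) = finsum (R_of B) (\<lambda>w. asmul B (c * p w) (wprod B g w)) (supp p)"
    using Phi_eq[OF f supp_smul] by simp
  also have "... = finsum (R_of B) (\<lambda>w. asmul B c (asmul B (p w) (wprod B g w))) (supp p)"
    by (simp add: smul_smul)
  also have "... = asmul B c (Phi B g p)"
    unfolding Phi_def using fsum_smul[OF f] by simp
  finally show ?thesis .
qed

lemma Phi_dl: "Phi B g (dl w) = wprod B g w"
  unfolding Phi_def supp_dl by (simp add: dl_def)

lemma Phi_mul_dl:
  assumes w: "set w \<subseteq> Lt X" and r: "r \<in> acar (tens_alg X)"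
  shows "Phi B g (tmul (dl w) r) = amul B (wprod B g w) (Phi B g r)"
  using r
proof (induction r rule: T_induct)
  case zero
  have "tmul (dl w) (\<lambda>w. 0) = (\<lambda>w. 0::'k)" unfolding tmul_def by simp
  then show ?case by (simp add: Phi_zero)
next
  case (step q c v)
  have dw: "dl w \<in> acar (tens_alg X)" by (rule dl_car[OF w])
  have dv: "dl v \<in> acar (tens_alg X)" by (rule dl_car[OF step(2)])
  have dwv: "dl (w @ v) \<in> acar (tens_alg X)" using w step(2) by (intro dl_car) simp
  have e: "tmul (dl w) (\<lambda>x. q x + c * dl v x) = (\<lambda>x. tmul (dl w) q x + c * dl (w @ v) x)"
    by (simp add: tmul_add_r tmul_smul_r tmul_dl)
  have tq: "tmul (dl w) q \<in> acar (tens_alg X)" by (rule tmul_car[OF dw step(1)])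
  have sm: "(\<lambda>x. c * dl (w @ v) x) \<in> acar (tens_alg X)"
    using kalg.smul_c[OF T_kalgI dwv, of c] by simp
  have sm2: "(\<lambda>x. c * dl v x) \<in> acar (tens_alg X)"
    using kalg.smul_c[OF T_kalgI dv, of c] by simp
  have "Phi B g (tmul (dl w) (\<lambda>x. q x + c * dl v x))
      = aadd B (Phi B g (tmul (dl w) q)) (Phi B g (\<lambda>x. c * dl (w @ v) x))"
    unfolding e by (rule Phi_add[OF tq sm])
  also have "... = aadd B (amul B (wprod B g w) (Phi B g q)) (asmul B c (wprod B g (w @ v)))"
    using step(4) Phi_smul[OF dwv] Phi_dl by simp
  also have "... = amul B (wprod B g w) (aadd B (Phi B g q) (asmul B c (wprod B g v)))"
    by (simp add: wprod_app rdistr smul_mul_r)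
  also have "... = amul B (wprod B g w) (Phi B g (\<lambda>x. q x + c * dl v x))"
    using Phi_add[OF step(1) sm2] Phi_smul[OF dv] Phi_dl by simp
  finally show ?case .
qed

lemma Phi_mul:
  assumes p: "p \<in> acar (tens_alg X)" and r: "r \<in> acar (tens_alg X)"
  shows "Phi B g (tmul p r) = amul B (Phi B g p) (Phi B g r)"
  using p
proof (induction p rule: T_induct)
  case zero
  have "tmul (\<lambda>w. 0::'k) r = (\<lambda>w. 0)" unfolding tmul_def by simp
  then show ?case by (simp add: Phi_zero)
next
  case (step q c v)
  have dv: "dl v \<in> acar (tens_alg X)" by (rule dl_car[OF step(2)])
  have e: "tmul (\<lambda>x. q x + c * dl v x) r = (\<lambda>x. tmul q r x + c * tmul (dl v) r x)"
    by (simp add: tmul_add_l tmul_smul_l)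
  have tq: "tmul q r \<in> acar (tens_alg X)" by (rule tmul_car[OF step(1) r])
  have tv: "tmul (dl v) r \<in> acar (tens_alg X)" by (rule tmul_car[OF dv r])
  have sm: "(\<lambda>x. c * tmul (dl v) r x) \<in> acar (tens_alg X)"
    using kalg.smul_c[OF T_kalgI tv, of c] by simp
  have sm2: "(\<lambda>x. c * dl v x) \<in> acar (tens_alg X)"
    using kalg.smul_c[OF T_kalgI dv, of c] by simp
  have "Phi B g (tmul (\<lambda>x. q x + c * dl v x) r)
      = aadd B (Phi B g (tmul q r)) (Phi B g (\<lambda>x. c * tmul (dl v) r x))"
    unfolding e by (rule Phi_add[OF tq sm])
  also have "... = aadd B (amul B (Phi B g q) (Phi B g r)) (asmul B c (amul B (wprod B g v) (Phi B g r)))"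
    using step(4) Phi_smul[OF tv] Phi_mul_dl[OF step(2) r] by simp
  also have "... = amul B (aadd B (Phi B g q) (asmul B c (wprod B g v))) (Phi B g r)"
    by (simp add: ldistr smul_mul_l)
  also have "... = amul B (Phi B g (\<lambda>x. q x + c * dl v x)) (Phi B g r)"
    using Phi_add[OF step(1) sm2] Phi_smul[OF dv] Phi_dl by simp
  finally show ?case .
qed

lemma Phi_khom: "khom (tens_alg X) B (Phi B g)"
  unfolding khom_def
  using Phi_add Phi_smul Phi_mul Phi_dl[of "[]"] by simp

lemma Phi_letter: "Phi B g (letter a) = g a"
  unfolding letter_dl Phi_dl by (simp add: wprod_Cons g_car)

end

lemma T_hom_unique:
  assumes B: "kalg B" and h1: "khom (tens_alg X) B \<phi>" and h2: "khom (tens_alg X) B \<psi>"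
    and l: "\<And>a. a \<in> Lt X \<Longrightarrow> \<phi> (letter a) = \<psi> (letter a)"
    and p: "p \<in> acar (tens_alg X)"
  shows "\<phi> p = \<psi> p"
  using p
proof (induction p rule: T_gen)
  case zero show ?case using khom_zero[OF T_kalgI B h1] khom_zero[OF T_kalgI B h2] by simp
next
  case one show ?case using khomD(5)[OF h1] khomD(5)[OF h2] by simp
next
  case (letter a) show ?case using l[OF letter] .
next
  case (add p r) show ?case using khomD(2)[OF h1 add(1,2)] khomD(2)[OF h2 add(1,2)] add(3,4) by simp
next
  case (smul p c) show ?case using khomD(3)[OF h1 smul(1)] khomD(3)[OF h2 smul(1)] smul(2) by simp
next
  case (mul p r) show ?case using khomD(4)[OF h1 mul(1,2)] khomD(4)[OF h2 mul(1,2)] mul(3,4) by simp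
qed

lemma T_hom_image:
  assumes B: "kalg B" and h: "khom (tens_alg X) B \<phi>"
    and W: "azero B \<in> W" "aone B \<in> W" "\<And>a. a \<in> Lt X \<Longrightarrow> \<phi> (letter a) \<in> W"
      "\<And>x y. x \<in> W \<Longrightarrow> y \<in> W \<Longrightarrow> aadd B x y \<in> W"
      "\<And>x c. x \<in> W \<Longrightarrow> asmul B c x \<in> W"
      "\<And>x y. x \<in> W \<Longrightarrow> y \<in> W \<Longrightarrow> amul B x y \<in> W"
    and p: "p \<in> acar (tens_alg X)"
  shows "\<phi> p \<in> W"
  using p
proof (induction p rule: T_gen)
  case zero show ?case using khom_zero[OF T_kalgI B h] W(1) by simp
next
  case one show ?case using khomD(5)[OF h] W(2) by simp
next
  case (letter a) show ?case using W(3)[OF letter] .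
next
  case (add p r) show ?case using khomD(2)[OF h add(1,2)] W(4)[OF add(3,4)] by simp
next
  case (smul p c) show ?case using khomD(3)[OF h smul(1)] W(5)[OF smul(2)] by simp
next
  case (mul p r) show ?case using khomD(4)[OF h mul(1,2)] W(6)[OF mul(3,4)] by simp
qed


definition vec :: "('k::field \<Rightarrow> 'L::ab_group_add \<Rightarrow> 'L) \<Rightarrow> 'L set \<Rightarrow> 'L \<Rightarrow> 'L option list \<Rightarrow> 'k" where
  "vec scale X x = (\<lambda>w. case w of [Some b] \<Rightarrow> module.representation scale X x b | _ \<Rightarrow> 0)"

lemma hat_vec: "hat scale X x = coset (tens_alg X) (I_free X) (vec scale X x)"
  unfolding hat_def vec_def ..

lemma vec_nz: "vec scale X x w \<noteq> 0 \<Longrightarrow> \<exists>b. w = [Some b] \<and> module.representation scale X x b \<noteq> 0"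
  unfolding vec_def by (auto split: list.splits option.splits)

lemma vec_Some[simp]: "vec scale X x [Some b] = module.representation scale X x b"
  unfolding vec_def by simp

locale setting =
  fixes scale :: "'k::field \<Rightarrow> 'L::ab_group_add \<Rightarrow> 'L" and br :: "'L \<Rightarrow> 'L \<Rightarrow> 'L"
    and X :: "'L set" and k :: 'k
  assumes la: "leibniz_alg scale br"
    and ind: "module.independent scale X"
    and sp: "module.span scale X = UNIV"
begin

lemma md: "module scale"
  using la unfolding leibniz_alg_def module_iff_vector_space by blast

lemma vec_car: "vec scale X x \<in> acar (tens_alg X)"
proof -
  have sub: "supp (vec scale X x) \<subseteq> (\<lambda>b. [Some b]) ` {b. module.representation scale X x b \<noteq> 0}"
    unfolding supp_def using vec_nz by fastforce
  have fin: "finite {b. module.representation scale X x b \<noteq> 0}"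
    using module.finite_representation[OF md] by blast
  have "set w \<subseteq> Lt X" if "w \<in> supp (vec scale X x)" for w
    using sub that module.representation_ne_zero[OF md] unfolding Lt_def by fastforce
  thus ?thesis unfolding T_car using finite_subset[OF sub] fin by blast
qed

lemma vec_add: "vec scale X (x + y) = (\<lambda>w. vec scale X x w + vec scale X y w)"
  unfolding vec_def using module.representation_add[OF md ind, of y x] sp
  by (auto split: list.splits option.splits)

lemma vec_smul: "vec scale X (scale c x) = (\<lambda>w. c * vec scale X x w)"
  unfolding vec_def using module.representation_scale[OF md ind, of x c] sp
  by (auto split: list.splits option.splits)

lemma vec_basis: "b \<in> X \<Longrightarrow> vec scale X b = letter (Some b)"
  unfolding vec_def letter_def using module.representation_basis[OF md ind, of b]
  by (auto split: list.splits option.splits)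

abbreviation "T \<equiv> (tens_alg X :: ('L option list \<Rightarrow> 'k, 'k) kalg)"
abbreviation "I \<equiv> (I_free X :: ('L option list \<Rightarrow> 'k) set)"
abbreviation "Ah \<equiv> (A_hat X :: (('L option list \<Rightarrow> 'k) set, 'k) kalg)"
abbreviation "qh \<equiv> (q_hat X :: ('L option list \<Rightarrow> 'k) set)"
abbreviation "RR \<equiv> R_ideal scale br k X"
abbreviation "U \<equiv> U_env scale br k X"
abbreviation "qb \<equiv> q_bar scale br k X"
abbreviation "ie \<equiv> i_env scale br k X"
abbreviation "p1 \<equiv> coset T I"
abbreviation "p2 \<equiv> coset Ah RR"

definition G1 :: "('L option list \<Rightarrow> 'k) set" where
  "G1 = {asub T (amul T qtil qtil) qtil} \<union>
      {asub T (amul T qtil (amul T a qtil)) (amul T qtil a) | a. a \<in> acar T}"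

lemma I_def': "I = gen_ideal T G1"
  unfolding I_free_def G1_def ..

lemma qtil_car: "qtil \<in> acar T"
  unfolding qtil_dl by (rule dl_car) (simp add: Lt_def)

lemma G1_car: "G1 \<subseteq> acar T"
  unfolding G1_def using kalg.sub_c[OF T_kalgI] kalg.mul_c[OF T_kalgI] qtil_car by blast

lemma kideal1: "kideal T I"
  unfolding I_def'
  by (rule kideal.intro[OF T_kalgI]) (rule kideal_axioms.intro, rule kalg.gen_ideal_ideal[OF T_kalgI G1_car])

interpretation K1: kideal T I by (rule kideal1)

lemma Ah_eq: "Ah = quot_alg T I" unfolding A_hat_def ..

lemma Ah_kalg: "kalg Ah" unfolding Ah_eq by (rule kideal_Q[OF kideal1])

interpretation AH: kalg Ah by (rule Ah_kalg)

lemma qh_eq: "qh = p1 qtil" unfolding q_hat_def ..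

lemma qh_car: "qh \<in> acar Ah" unfolding qh_eq Ah_eq using qtil_car by simp

lemma hat_car: "hat scale X x \<in> acar Ah" unfolding hat_vec Ah_eq using vec_car by simp

lemma Ah_cases: "C \<in> acar Ah \<Longrightarrow> \<exists>p\<in>acar T. C = p1 p"
  unfolding Ah_eq K1.Q_car by blast

lemma G1_I: "G1 \<subseteq> I" unfolding I_def' by (rule gen_ideal_sup)

lemma qh_idem: "amul Ah qh qh = qh"
proof -
  have "asub T (amul T qtil qtil) qtil \<in> I" using G1_I unfolding G1_def by blast
  hence "p1 (amul T qtil qtil) = p1 qtil" using K1.pi_eq_iff qtil_car by (simp add: tmul_car)
  thus ?thesis unfolding qh_eq Ah_eq using qtil_car by simp
qed

lemma qh_inv: "C \<in> acar Ah \<Longrightarrow> amul Ah qh (amul Ah C qh) = amul Ah qh C"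
proof -
  assume "C \<in> acar Ah"
  then obtain a where a: "a \<in> acar T" "C = p1 a" using Ah_cases by blast
  have "asub T (amul T qtil (amul T a qtil)) (amul T qtil a) \<in> I" using G1_I a(1) unfolding G1_def by blast
  hence "p1 (amul T qtil (amul T a qtil)) = p1 (amul T qtil a)" using K1.pi_eq_iff qtil_car a(1) by (simp add: tmul_car)
  thus ?thesis unfolding qh_eq Ah_eq a(2) using qtil_car a(1) by (simp add: tmul_car)
qed

definition G2 where
  "G2 = {asub Ah (hat scale X (br x y)) (br4 Ah qh k (hat scale X x) (hat scale X y)) | x y. True}"

lemma RR_def': "RR = gen_ideal Ah G2" unfolding R_ideal_def G2_def ..

lemma br4_car: "a \<in> acar Ah \<Longrightarrow> b \<in> acar Ah \<Longrightarrow> br4 Ah qh k a b \<in> acar Ah"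
  unfolding br4_def using qh_car by simp

lemma G2_car: "G2 \<subseteq> acar Ah"
  unfolding G2_def using hat_car br4_car by auto

lemma kideal2: "kideal Ah RR"
  unfolding RR_def'
  by (rule kideal.intro[OF Ah_kalg]) (rule kideal_axioms.intro, rule AH.gen_ideal_ideal[OF G2_car])

interpretation K2: kideal Ah RR by (rule kideal2)

lemma U_eq: "U = quot_alg Ah RR" unfolding U_env_def ..

lemma U_kalg: "kalg U" unfolding U_eq by (rule kideal_Q[OF kideal2])

interpretation UU: kalg U by (rule U_kalg)

lemma qb_eq: "qb = p2 qh" unfolding q_bar_def ..
lemma ie_eq: "ie x = p2 (hat scale X x)" unfolding i_env_def ..

lemma U_cases: "C \<in> acar U \<Longrightarrow> \<exists>a\<in>acar Ah. C = p2 a"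
  unfolding U_eq K2.Q_car by blast

lemma qb_car: "qb \<in> acar U" unfolding qb_eq U_eq using qh_car by simp

lemma inv_set_U: "inv_set U qb = acar U"
proof -
  have "amul U qb (amul U C qb) = amul U qb C" if C: "C \<in> acar U" for C
  proof -
    obtain a where a: "a \<in> acar Ah" "C = p2 a" using U_cases[OF C] by blast
    show ?thesis unfolding qb_eq U_eq a(2) using a(1) qh_car qh_inv[OF a(1)] by simp
  qed
  thus ?thesis unfolding inv_set_def by auto
qed

lemma U_invariant: "invariant_alg U qb"
  unfolding invariant_alg_def using UU.kalg qb_car qh_idem qh_car
  unfolding qb_eq U_eq by simp

lemma hat_add: "hat scale X (x + y) = aadd Ah (hat scale X x) (hat scale X y)"
  unfolding hat_vec Ah_eq using vec_car by (simp add: vec_add)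

lemma hat_smul: "hat scale X (scale c x) = asmul Ah c (hat scale X x)"
  unfolding hat_vec Ah_eq using vec_car by (simp add: vec_smul)

lemma ie_leib: "leib_hom scale br k U qb ie"
  unfolding leib_hom_def
proof (intro conjI allI)
  fix x have "ie x \<in> acar U" unfolding ie_eq U_eq using hat_car by simp
  thus "ie x \<in> inv_set U qb" unfolding inv_set_U .
next
  fix x y show "ie (x + y) = aadd U (ie x) (ie y)" unfolding ie_eq U_eq hat_add using hat_car by simp
next
  fix c x show "ie (scale c x) = asmul U c (ie x)" unfolding ie_eq U_eq hat_smul using hat_car by simp
next
  fix x y
  have g: "asub Ah (hat scale X (br x y)) (br4 Ah qh k (hat scale X x) (hat scale X y)) \<in> RR"
    using gen_ideal_sup[of G2 Ah] unfolding RR_def' G2_def by blast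
  have e: "p2 (hat scale X (br x y)) = p2 (br4 Ah qh k (hat scale X x) (hat scale X y))"
    using K2.pi_eq_iff[OF hat_car br4_car[OF hat_car hat_car]] g by simp
  have "br4 U qb k (ie x) (ie y) = p2 (br4 Ah qh k (hat scale X x) (hat scale X y))"
    unfolding ie_eq qb_eq U_eq
    using khom_br4[OF Ah_kalg kideal_Q[OF kideal2] K2.pi_khom hat_car hat_car qh_car] by simp
  thus "ie (br x y) = br4 U qb k (ie x) (ie y)" using e ie_eq by simp
qed

end


context setting begin
lemma K1I: "kideal T I" by (rule kideal1)
lemma K2I: "kideal Ah RR" by (rule kideal2)
end

locale usetting = setting scale br X k
  for scale :: "'k::field \<Rightarrow> 'L::ab_group_add \<Rightarrow> 'L" and br X k +
  fixes A :: "('b, 'k) kalg" and q :: 'b and f :: "'L \<Rightarrow> 'b"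
  assumes inv: "invariant_alg A q" and lh: "leib_hom scale br k A q f"
begin

lemma A_kalg: "kalg A" using inv unfolding invariant_alg_def by (simp add: kalg.intro)

sublocale AA: kalg A by (rule A_kalg)

lemma q_car: "q \<in> acar A" and qq: "amul A q q = q"
  using inv unfolding invariant_alg_def by auto

abbreviation "W \<equiv> inv_set A q"

lemma f_W: "f x \<in> W" using lh unfolding leib_hom_def by blast
lemma f_car: "f x \<in> acar A" using f_W unfolding inv_set_def by blast
lemma f_add: "f (x + y) = aadd A (f x) (f y)" using lh unfolding leib_hom_def by blast
lemma f_smul: "f (scale c x) = asmul A c (f x)" using lh unfolding leib_hom_def by blast
lemma f_br: "f (br x y) = br4 A q k (f x) (f y)" using lh unfolding leib_hom_def by blast

lemma W_car: "a \<in> W \<Longrightarrow> a \<in> acar A" unfolding inv_set_def by blast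
lemma W_eq: "a \<in> W \<Longrightarrow> amul A q (amul A a q) = amul A q a" unfolding inv_set_def by blast

lemma W_zero: "azero A \<in> W" unfolding inv_set_def using q_car by simp
lemma W_one: "aone A \<in> W" unfolding inv_set_def using q_car qq by simp
lemma W_q: "q \<in> W" unfolding inv_set_def using q_car qq by (simp add: AA.mul_assoc[symmetric])
lemma W_add:
  assumes a: "a \<in> W" and b: "b \<in> W" shows "aadd A a b \<in> W"
proof -
  have ac: "a \<in> acar A" and bc: "b \<in> acar A" using a b W_car by auto
  have "amul A q (amul A (aadd A a b) q) = aadd A (amul A q (amul A a q)) (amul A q (amul A b q))"
    using ac bc q_car by (simp add: AA.ldistr AA.rdistr)
  also have "... = aadd A (amul A q a) (amul A q b)" using W_eq[OF a] W_eq[OF b] by simp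
  also have "... = amul A q (aadd A a b)" using ac bc q_car by (simp add: AA.rdistr)
  finally show ?thesis unfolding inv_set_def using ac bc by simp
qed

lemma W_smul:
  assumes a: "a \<in> W" shows "asmul A c a \<in> W"
proof -
  have ac: "a \<in> acar A" using a W_car by auto
  have "amul A q (amul A (asmul A c a) q) = asmul A c (amul A q (amul A a q))"
    using ac q_car by (simp add: AA.smul_mul_l AA.smul_mul_r)
  also have "... = asmul A c (amul A q a)" using W_eq[OF a] by simp
  also have "... = amul A q (asmul A c a)" using ac q_car by (simp add: AA.smul_mul_r)
  finally show ?thesis unfolding inv_set_def using ac by simp
qed

lemma W_mul:
  assumes a: "a \<in> W" and b: "b \<in> W" shows "amul A a b \<in> W"
proof -
  have ac: "a \<in> acar A" and bc: "b \<in> acar A" using a b W_car by auto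
  note ha = W_eq[OF a] and hb = W_eq[OF b]
  have "amul A q (amul A (amul A a b) q) = amul A (amul A q a) (amul A b q)"
    using ac bc q_car by (simp add: AA.mul_assoc)
  also have "... = amul A (amul A q (amul A a q)) (amul A b q)" using ha by simp
  also have "... = amul A (amul A q a) (amul A q (amul A b q))"
    using ac bc q_car by (simp add: AA.mul_assoc)
  also have "... = amul A (amul A q a) (amul A q b)" using hb by simp
  also have "... = amul A (amul A q (amul A a q)) b"
    using ac bc q_car by (simp add: AA.mul_assoc)
  also have "... = amul A q (amul A a b)" using ha ac bc q_car by (simp add: AA.mul_assoc)
  finally show ?thesis unfolding inv_set_def using ac bc by simp
qed

definition g :: "'L option \<Rightarrow> 'b" where "g a = (case a of None \<Rightarrow> q | Some x \<Rightarrow> f x)"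

lemma g_car: "g a \<in> acar A" unfolding g_def using q_car f_car by (cases a) auto

sublocale TM: tmap A g by (unfold_locales) (rule g_car)

abbreviation "Ph \<equiv> Phi A g"

lemma Ph_khom: "khom T A Ph" by (rule TM.Phi_khom)

lemma Ph_W: "p \<in> acar T \<Longrightarrow> Ph p \<in> W"
proof (rule T_hom_image[OF A_kalg Ph_khom W_zero W_one _ W_add W_smul W_mul])
  fix a assume "a \<in> Lt X"
  show "Ph (letter a) \<in> W" unfolding TM.Phi_letter g_def using W_q f_W by (cases a) auto
qed

lemma Ph_qtil: "Ph qtil = q"
  unfolding qtil_def TM.Phi_letter g_def by simp

lemma Ph_kills_I: "\<forall>i\<in>I. Ph i = azero A"
proof -
  have ker: "is_ideal T {a\<in>acar T. Ph a = azero A}" by (rule kernel_ideal[OF T_kalgI A_kalg Ph_khom])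
  have "G1 \<subseteq> {a\<in>acar T. Ph a = azero A}"
  proof
    fix x assume x: "x \<in> G1"
    show "x \<in> {a\<in>acar T. Ph a = azero A}"
    proof -
      have xc: "x \<in> acar T" using x G1_car by blast
      note hs = khom_sub[OF T_kalgI A_kalg Ph_khom] khomD[OF Ph_khom]
      have "Ph x = azero A"
      proof (cases "x = asub T (amul T qtil qtil) qtil")
        case True
        thus ?thesis using qtil_car by (simp add: hs tmul_car Ph_qtil qq q_car del: T_simps)
      next
        case False
        then obtain a where a: "a \<in> acar T" "x = asub T (amul T qtil (amul T a qtil)) (amul T qtil a)"
          using x unfolding G1_def by blast
        have "Ph x = asub A (amul A q (amul A (Ph a) q)) (amul A q (Ph a))"
          using a qtil_car by (simp add: hs tmul_car Ph_qtil del: T_simps)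
        also have "... = azero A" using W_eq[OF Ph_W[OF a(1)]] Ph_W[OF a(1)] W_car q_car by simp
        finally show ?thesis .
      qed
      thus ?thesis using xc by simp
    qed
  qed
  hence "I \<subseteq> {a\<in>acar T. Ph a = azero A}" unfolding I_def' by (rule gen_ideal_min[OF ker])
  thus ?thesis by blast
qed

definition F where "F = (\<lambda>C. Ph (rep C))"

lemma F_khom: "khom Ah A F" and F_p1: "p \<in> acar T \<Longrightarrow> F (p1 p) = Ph p"
  unfolding F_def Ah_eq using kideal.induced[OF K1I A_kalg Ph_khom Ph_kills_I] by auto

lemma f_zero: "f 0 = azero A"
  by (rule AA.idem_zero) (simp_all add: f_car f_add[symmetric])

lemma f_sum: "finite S \<Longrightarrow> f (sum h S) = finsum (R_of A) (\<lambda>s. f (h s)) S"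
proof (induction S rule: finite_induct)
  case empty show ?case by (simp add: f_zero)
next
  case (insert x S)
  have P: "(\<lambda>s. f (h s)) \<in> S \<rightarrow> acar A" using f_car by auto
  show ?case using insert AA.R.finsum_insert[OF insert(1,2) P] f_car by (simp add: f_add)
qed

lemma Ph_vec: "Ph (vec scale X x) = f x"
proof -
  define Bx where "Bx = {b. module.representation scale X x b \<noteq> 0}"
  have fin: "finite Bx" unfolding Bx_def using module.finite_representation[OF md] by blast
  have sub: "supp (vec scale X x) \<subseteq> (\<lambda>b. [Some b]) ` Bx"
    unfolding supp_def Bx_def using vec_nz by fastforce
  have "Ph (vec scale X x) = finsum (R_of A) (\<lambda>w. asmul A (vec scale X x w) (wprod A g w)) ((\<lambda>b. [Some b]) ` Bx)"
    by (rule TM.Phi_eq[OF finite_imageI[OF fin] sub])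
  also have "... = finsum (R_of A) (\<lambda>b. asmul A (module.representation scale X x b) (f b)) Bx"
    by (subst AA.R.finsum_reindex) (auto simp: inj_on_def TM.wprod_Cons g_def f_car)
  also have "... = finsum (R_of A) (\<lambda>b. f (scale (module.representation scale X x b) b)) Bx"
    by (simp add: f_smul)
  also have "... = f (\<Sum>b\<in>Bx. scale (module.representation scale X x b) b)"
    by (rule f_sum[OF fin, symmetric])
  also have "(\<Sum>b\<in>Bx. scale (module.representation scale X x b) b) = x"
    unfolding Bx_def using module.sum_nonzero_representation_eq[OF md ind] sp by simp
  finally show ?thesis .
qed

lemma F_hat: "F (hat scale X x) = f x"
  unfolding hat_vec using F_p1[OF vec_car] Ph_vec by simp

lemma F_qh: "F qh = q"
  unfolding qh_eq using F_p1[OF qtil_car] Ph_qtil by simp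

lemma F_kills_RR: "\<forall>i\<in>RR. F i = azero A"
proof -
  have ker: "is_ideal Ah {a\<in>acar Ah. F a = azero A}" by (rule kernel_ideal[OF Ah_kalg A_kalg F_khom])
  have "G2 \<subseteq> {a\<in>acar Ah. F a = azero A}"
  proof
    fix z assume z: "z \<in> G2"
    then obtain x y where zz: "z = asub Ah (hat scale X (br x y)) (br4 Ah qh k (hat scale X x) (hat scale X y))"
      unfolding G2_def by blast
    have "F z = asub A (f (br x y)) (br4 A q k (f x) (f y))"
      unfolding zz
      using khom_sub[OF Ah_kalg A_kalg F_khom hat_car br4_car[OF hat_car hat_car]]
        khom_br4[OF Ah_kalg A_kalg F_khom hat_car hat_car qh_car] F_hat F_qh by simp
    also have "... = azero A" using f_br f_car q_car unfolding br4_def by simp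
    finally show "z \<in> {a\<in>acar Ah. F a = azero A}" using z G2_car by blast
  qed
  hence "RR \<subseteq> {a\<in>acar Ah. F a = azero A}" unfolding RR_def' by (rule gen_ideal_min[OF ker])
  thus ?thesis by blast
qed

definition f' where "f' = (\<lambda>C. F (rep C))"

lemma f'_khom: "khom U A f'" and f'_p2: "a \<in> acar Ah \<Longrightarrow> f' (p2 a) = F a"
  unfolding f'_def U_eq using kideal.induced[OF K2I A_kalg F_khom F_kills_RR] by auto

lemma U_cases2: "C \<in> acar U \<Longrightarrow> \<exists>p\<in>acar T. C = p2 (p1 p)"
proof -
  assume "C \<in> acar U"
  then obtain a where a: "a \<in> acar Ah" "C = p2 a" using U_cases by blast
  then obtain p where p: "p \<in> acar T" "a = p1 p" using Ah_cases by blast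
  show ?thesis using a p by blast
qed

lemma f'_inv_hom: "inv_hom U qb A q f'"
proof -
  have 1: "f' a \<in> W" if aU: "a \<in> acar U" for a
  proof -
    obtain p where p: "p \<in> acar T" "a = p2 (p1 p)" using U_cases2[OF aU] by blast
    have pc: "p1 p \<in> acar Ah" unfolding Ah_eq by (rule kideal.pi_car[OF K1I p(1)])
    have "f' a = F (p1 p)" unfolding p(2) by (rule f'_p2[OF pc])
    also have "... = Ph p" by (rule F_p1[OF p(1)])
    finally show "f' a \<in> W" using Ph_W[OF p(1)] by simp
  qed
  have 2: "f' qb = q" unfolding qb_eq using f'_p2[OF qh_car] F_qh by simp
  show ?thesis unfolding inv_hom_def inv_set_U
    apply (intro conjI ballI allI)
         apply (erule 1)
        apply (erule (1) khomD(2)[OF f'_khom])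
       apply (erule khomD(3)[OF f'_khom])
      apply (erule (1) khomD(4)[OF f'_khom])
     apply (rule khomD(5)[OF f'_khom])
    apply (rule 2)
    done
qed

lemma f'_ie: "f x = f' (ie x)"
  unfolding ie_eq using f'_p2[OF hat_car] F_hat by simp

lemma unique:
  assumes h: "inv_hom U qb A q g'" and e: "\<forall>x. f x = g' (ie x)" and C: "C \<in> acar U"
  shows "g' C = f' C"
proof -
  have gk: "khom U A g'"
    using h unfolding inv_hom_def inv_set_U khom_def using W_car by blast
  have pk1: "khom T Ah p1" unfolding Ah_eq by (rule kideal.pi_khom[OF K1I])
  have pk2: "khom Ah U p2" unfolding U_eq by (rule kideal.pi_khom[OF K2I])
  have c1: "khom T A (g' \<circ> (p2 \<circ> p1))" by (intro khom_comp[OF khom_comp[OF pk1 pk2] gk])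
  have c2: "khom T A (f' \<circ> (p2 \<circ> p1))" by (intro khom_comp[OF khom_comp[OF pk1 pk2] f'_khom])
  have l: "(g' \<circ> (p2 \<circ> p1)) (letter a) = (f' \<circ> (p2 \<circ> p1)) (letter a)" if a: "a \<in> Lt X" for a
  proof (cases a)
    case None
    have "p2 (p1 (letter a)) = qb" unfolding None qb_eq qh_eq qtil_def ..
    moreover have "g' qb = q" using h unfolding inv_hom_def by blast
    moreover have "f' qb = q" using f'_inv_hom unfolding inv_hom_def by blast
    ultimately show ?thesis by simp
  next
    case (Some x)
    have x: "x \<in> X" using a Some unfolding Lt_def by auto
    have "p2 (p1 (letter a)) = ie x" unfolding Some ie_eq hat_vec vec_basis[OF x] ..
    thus ?thesis using e f'_ie by simp
  qed
  obtain p where p: "p \<in> acar T" "C = p2 (p1 p)" using U_cases2[OF C] by blast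
  have "(g' \<circ> (p2 \<circ> p1)) p = (f' \<circ> (p2 \<circ> p1)) p"
    by (rule T_hom_unique[OF A_kalg c1 c2 l p(1)])
  thus ?thesis using p(2) by simp
qed

end

context setting begin

lemma univ:
  fixes A :: "('b, 'k) kalg"
  assumes "invariant_alg A q" "leib_hom scale br k A q f"
  shows "\<exists>f'. inv_hom U qb A q f' \<and> (\<forall>x. f x = f' (ie x)) \<and>
          (\<forall>g. inv_hom U qb A q g \<and> (\<forall>x. f x = g (ie x)) \<longrightarrow> (\<forall>u\<in>inv_set U qb. g u = f' u))"
proof -
  interpret us: usetting scale br X k A q f
    by (rule usetting.intro[OF setting_axioms]) (rule usetting_axioms.intro[OF assms])
  show ?thesis
  proof (intro exI[of _ us.f'] conjI allI impI ballI)
    show "inv_hom U qb A q us.f'" by (rule us.f'_inv_hom)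
  next
    fix x show "f x = us.f' (ie x)" by (rule us.f'_ie)
  next
    fix g' u assume h: "inv_hom U qb A q g' \<and> (\<forall>x. f x = g' (ie x))" and u: "u \<in> inv_set U qb"
    have uc: "u \<in> acar U" using u unfolding inv_set_U .
    show "g' u = us.f' u" by (rule us.unique[OF conjunct1[OF h] conjunct2[OF h] uc])
  qed
qed

lemma env: "enveloping4 scale br k U qb ie TYPE('b)"
  unfolding enveloping4_def
  apply (intro conjI allI impI)
    apply (rule U_invariant)
   apply (rule ie_leib)
  apply (erule conjE)
  apply (rule univ)
   apply assumption+
  done

end


theorem proposition5p1:
  fixes scale :: "'k::field \<Rightarrow> 'L::ab_group_add \<Rightarrow> 'L"
    and br :: "'L \<Rightarrow> 'L \<Rightarrow> 'L"
    and X :: "'L set"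
    and k :: 'k
  assumes "leibniz_alg scale br"
    and "module.independent scale X"
    and "module.span scale X = UNIV"
    and "k \<noteq> 0"
  shows "enveloping4 scale br k (U_env scale br k X) (q_bar scale br k X) (i_env scale br k X)
           TYPE('b)"
proof -
  interpret setting scale br X k
    by (rule setting.intro) (fact assms(1), fact assms(2), fact assms(3))
  show ?thesis by (rule env)
qed

end
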